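(* Let $\gamma > 1$ be a real number and let $N$ be an integer with $N > 6$. Let $\alpha^{*}$ denote the smallest strictly positive root of the equation $$1-\cos(\alpha) - \frac{\alpha^2}{2\gamma}=0 .$$ Then for every real $z \in \left[-\frac{\alpha^{*}}{N}, \frac{\alpha^{*}}{N}\right]$ the inequality $$\cos(z) - \frac{\gamma}{N^2}\bigl(\cos(Nz) - 1\bigr) - 1 \geq 0$$ holds.
   Context: $N$ is the number of antennas of a uniform linear array and $\gamma$ plays the role of the allowed array-gain degradation factor (a linear-scale ratio $10^{\gamma_{\mathrm{dB}}/10}$, hence strictly greater than $1$). *)

theory Defs
  imports "HOL-Analysis.Analysis"
begin

end

theory Submission
  imports Defs "HOL-Real_Asymp.Real_Asymp"
begin

lemma one_minus_cos_le: "1 - cos (t::real) \<le> t^2 / 2"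
proof -
  have "cos t = 1 - 2 * (sin (t/2))^2" using cos_double_sin[of "t/2"] by simp
  moreover have "(sin (t/2))^2 \<le> (t/2)^2"
    using abs_sin_x_le_abs_x[of "t/2"] by (metis abs_ge_zero power2_abs power_mono)
  ultimately show ?thesis by (simp add: power_divide)
qed

lemma lim_cos: "((\<lambda>a::real. (1 - cos a) / a^2) \<longlongrightarrow> 1/2) (at_right 0)"
  by real_asymp

theorem lemma1:
  fixes \<gamma> :: real and N :: nat and \<alpha>s :: real
  assumes "\<gamma> > 1" and "N > 6"
    and "\<alpha>s > 0"
    and "1 - cos \<alpha>s - \<alpha>s^2 / (2*\<gamma>) = 0"
    and "\<And>a. 0 < a \<Longrightarrow> a < \<alpha>s \<Longrightarrow> 1 - cos a - a^2 / (2*\<gamma>) \<noteq> 0"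
  shows "\<forall>z::real. -\<alpha>s / real N \<le> z \<and> z \<le> \<alpha>s / real N \<longrightarrow>
           cos z - \<gamma> / (real N)^2 * (cos (real N * z) - 1) - 1 \<ge> 0"
proof -
  define g where "g a = 1 - cos a - a^2 / (2*\<gamma>)" for a :: real
  have gpos_ev: "eventually (\<lambda>a. g a > 0) (at_right 0)"
  proof -
    have "1/(2*\<gamma>) < 1/2" using assms(1) by (simp add: field_simps)
    then have "eventually (\<lambda>a. (1 - cos a) / a^2 > 1/(2*\<gamma>)) (at_right 0)"
      using lim_cos order_tendstoD(1) by blast
    moreover have "eventually (\<lambda>a::real. a > 0) (at_right 0)"
      by (simp add: eventually_at_right_less)
    ultimately show ?thesis
    proof eventually_elim
      case (elim a)
      then have "a^2 / (2*\<gamma>) < 1 - cos a" using assms(1)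
        by (simp add: field_simps)
      then show ?case by (simp add: g_def)
    qed
  qed
  have gnn: "g a \<ge> 0" if "0 < a" "a < \<alpha>s" for a
  proof (rule ccontr)
    assume "\<not> g a \<ge> 0"
    then have neg: "g a < 0" by simp
    obtain d where d: "d > 0" "\<And>y. 0 < y \<Longrightarrow> y < d \<Longrightarrow> g y > 0"
      using gpos_ev unfolding eventually_at_right_field by auto
    define b where "b = min d a / 2"
    have b: "g b > 0" "b < a" "b > 0" using d that(1) unfolding b_def by auto
    have cont: "continuous_on {b..a} g" unfolding g_def using assms(1) by (intro continuous_intros) auto
    obtain c where c: "b \<le> c" "c \<le> a" "g c = 0"
      using IVT2'[of g a 0 b] b neg cont by force
    show False using assms(5)[of c] c b that unfolding g_def by auto
  qed
  have key: "\<bar>x\<bar>^2 / (2*\<gamma>) \<le> 1 - cos x" if "\<bar>x\<bar> \<le> \<alpha>s" for x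
  proof -
    have "cos x = cos \<bar>x\<bar>" by simp
    moreover have "g \<bar>x\<bar> \<ge> 0"
    proof (cases "\<bar>x\<bar> = 0 \<or> \<bar>x\<bar> = \<alpha>s")
      case True then show ?thesis using assms(4) by (auto simp: g_def)
    next
      case False then show ?thesis using gnn that by auto
    qed
    ultimately show ?thesis unfolding g_def by simp
  qed
  show ?thesis
  proof (intro allI impI)
    fix z :: real
    assume z: "-\<alpha>s / real N \<le> z \<and> z \<le> \<alpha>s / real N"
    have Np: "real N > 0" using assms(2) by simp
    have "-\<alpha>s \<le> real N * z" "real N * z \<le> \<alpha>s" using z Np
      by (simp_all add: field_simps)
    then have "\<bar>real N * z\<bar> \<le> \<alpha>s" by linarith
    then have k: "(real N * z)^2 / (2*\<gamma>) \<le> 1 - cos (real N * z)" using key by simp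
    then have "\<gamma> * ((real N * z)^2 / (2*\<gamma>)) \<le> \<gamma> * (1 - cos (real N * z))"
      using assms(1) by (intro mult_left_mono) auto
    then have "(real N)^2 * z^2 / 2 \<le> \<gamma> * (1 - cos (real N * z))"
      using assms(1) by (simp add: power_mult_distrib)
    then have "z^2/2 \<le> \<gamma> / (real N)^2 * (1 - cos (real N * z))"
      using Np by (simp add: field_simps)
    moreover have "1 - cos z \<le> z^2/2" by (rule one_minus_cos_le)
    moreover have "\<gamma> / (real N)^2 * (cos (real N * z) - 1) = - (\<gamma> / (real N)^2 * (1 - cos (real N * z)))"
      by (simp add: right_diff_distrib)
    ultimately show "cos z - \<gamma> / (real N)^2 * (cos (real N * z) - 1) - 1 \<ge> 0"
      by linarith
  qed
qed

end
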